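(* Let $\mathcal{D}$ be a banded unlink diagram of a surface link $S$ in a smooth $4$-manifold $X$, with diagrammatic quandle $Q(\mathcal{D})$, and let $C=\{x_1,\dots,x_n\}$ be the primary generators corresponding to the arcs contained in a single component of the link $L$ of $\mathcal{D}$. Let $d$ be an integer. If $x_i^d\equiv1$ for some $x_i\in C$, then $x_j^d\equiv1$ for every $x_j\in C$.
   Context: Banded unlink diagram: for a self-indexing Morse function $h:X\to[0,4]$ with Kirby diagram $\mathcal{K}=L_1\cup L_2$ (dotted link $L_1$ for $1$-handles, framed link $L_2$ for $2$-handles), a surface in banded unlink position meets $h^{-1}(t)$, $t\in(1/2,3/2)$, in a link $L$, and at level $3/2$ in $L$ plus a set $v$ of bands; the banded unlink diagram is $\mathcal{D}=(\mathcal{K},L,v)$ (with $L$ bounding disjoint disks at level $1/2$ and the band-resolved link bounding disjoint disks at level $5/2$). $Q(\mathcal{D})$ is the augmented quandle presented with primary generators the arcs $x_i$ of $L$ and operator generators the arcs $a_j$ of $L_1$; at each crossing of $L$ under an arc $y$ of $L\cup L_1$ the incoming arc $x_i$ and outgoing arc $x_{i+1}$ satisfy $x_{i+1}=x_i^{y^{\epsilon}}$ with $\epsilon=\pm1$ determined by the orientation of $y$ (no change under bands or $L_2$); further relations come from bands, crossings of $L_1$ and the $2$-handle link $L_2$. Every element acts on $Q(\mathcal{D})$ through its image in the operator group $F(\mathbf x\cup\mathbf a)/\!\equiv$; for a word $w\in F(\mathbf x\cup\mathbf a)$, $w\equiv1$ means $w$ is trivial in this operator group (it acts as the identity), and the augmentation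 satisfies $\partial(x^{w})=w^{-1}\partial(x)w$. *)

theory Defs
  imports "HOL-Algebra.Algebra"
begin

definition aug_quandle ::
  "'q set \<Rightarrow> ('g,'m) monoid_scheme \<Rightarrow> ('q \<Rightarrow> 'g \<Rightarrow> 'q) \<Rightarrow> ('q \<Rightarrow> 'g) \<Rightarrow> bool" where
  "aug_quandle Q G act aug \<longleftrightarrow>
     group G \<and>
     (\<forall>x\<in>Q. \<forall>g\<in>carrier G. act x g \<in> Q) \<and>
     (\<forall>x\<in>Q. act x \<one>\<^bsub>G\<^esub> = x) \<and>
     (\<forall>x\<in>Q. \<forall>g\<in>carrier G. \<forall>h\<in>carrier G. act (act x g) h = act x (g \<otimes>\<^bsub>G\<^esub> h)) \<and>
     (\<forall>x\<in>Q. aug x \<in> carrier G) \<and>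
     (\<forall>x\<in>Q. act x (aug x) = x) \<and>
     (\<forall>x\<in>Q. \<forall>g\<in>carrier G. aug (act x g) = inv\<^bsub>G\<^esub> g \<otimes>\<^bsub>G\<^esub> aug x \<otimes>\<^bsub>G\<^esub> g)"

text \<open>Image in the operator group of a generator of F(x \<union> a):
  a primary generator x (arc of L) maps to aug(x), an operator generator
  a (arc of the dotted link L1) maps to its operator.\<close>

fun op_gen :: "('q \<Rightarrow> 'g) \<Rightarrow> ('p \<Rightarrow> 'q) \<Rightarrow> ('a \<Rightarrow> 'g) \<Rightarrow> 'p + 'a \<Rightarrow> 'g" where
  "op_gen aug ip ia (Inl x) = aug (ip x)"
| "op_gen aug ip ia (Inr a) = ia a"

definition sgn_pow :: "('g,'m) monoid_scheme \<Rightarrow> 'g \<Rightarrow> bool \<Rightarrow> 'g" where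
  "sgn_pow G g e = (if e then g else inv\<^bsub>G\<^esub> g)"

text \<open>Crossing relations along one component of L: the arcs of the component,
  in order along its orientation, are xs!0, ..., xs!(n-1) (cyclically); passing
  from xs!k to xs!(k+1 mod n) the component crosses under the arc ys!k of
  L \<union> L1 (Inl = arc of L, Inr = arc of L1) with sign es!k, giving the relation
  x_(k+1) = x_k^(y_k^eps_k) in Q(D).\<close>

definition component_relations ::
  "('g,'m) monoid_scheme \<Rightarrow> ('q \<Rightarrow> 'g \<Rightarrow> 'q) \<Rightarrow> ('q \<Rightarrow> 'g) \<Rightarrow> ('p \<Rightarrow> 'q) \<Rightarrow> ('a \<Rightarrow> 'g)
    \<Rightarrow> 'p list \<Rightarrow> ('p + 'a) list \<Rightarrow> bool list \<Rightarrow> bool" where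
  "component_relations G act aug ip ia xs ys es \<longleftrightarrow>
     xs \<noteq> [] \<and> length ys = length xs \<and> length es = length xs \<and>
     (\<forall>k < length xs.
        ip (xs ! ((k + 1) mod length xs)) =
        act (ip (xs ! k)) (sgn_pow G (op_gen aug ip ia (ys ! k)) (es ! k)))"

end

theory Submission
  imports Defs
begin

lemma conj_hom:
  fixes G (structure)
  assumes "group G" "g \<in> carrier G"
  shows "(\<lambda>a. inv\<^bsub>G\<^esub> g \<otimes>\<^bsub>G\<^esub> a \<otimes>\<^bsub>G\<^esub> g) \<in> hom G G"
proof -
  interpret group G by fact
  show ?thesis
    proof (rule homI)
    fix x y assume xy: "x \<in> carrier G" "y \<in> carrier G"
    have "inv g \<otimes> (x \<otimes> y) \<otimes> g = inv g \<otimes> x \<otimes> (g \<otimes> inv g) \<otimes> y \<otimes> g"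
      using xy assms(2) by (simp add: m_assoc)
    also have "\<dots> = inv g \<otimes> x \<otimes> g \<otimes> (inv g \<otimes> y \<otimes> g)"
      using xy assms(2) by (simp only: m_assoc inv_closed m_closed)
    finally show "inv g \<otimes> (x \<otimes> y) \<otimes> g = inv g \<otimes> x \<otimes> g \<otimes> (inv g \<otimes> y \<otimes> g)" .
  qed (use assms(2) in simp)
qed

lemma conj_pow_one:
  fixes G (structure)
  assumes "group G" "g \<in> carrier G" "a \<in> carrier G"
  shows "((inv\<^bsub>G\<^esub> g \<otimes>\<^bsub>G\<^esub> a \<otimes>\<^bsub>G\<^esub> g) [^]\<^bsub>G\<^esub> (d::int) = \<one>\<^bsub>G\<^esub>)
     \<longleftrightarrow> (a [^]\<^bsub>G\<^esub> d = \<one>\<^bsub>G\<^esub>)"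
proof -
  interpret group G by fact
  have e: "(inv g \<otimes> a \<otimes> g) [^] d = inv g \<otimes> (a [^] d) \<otimes> g"
    using hom_int_pow[OF conj_hom[OF assms(1,2)] assms(3) assms(1) assms(1)] by simp
  have c: "a [^] d \<in> carrier G" using assms by simp
  show ?thesis
  proof
    assume "(inv g \<otimes> a \<otimes> g) [^] d = \<one>"
    then have "inv g \<otimes> (a [^] d) \<otimes> g = \<one>" using e by simp
    then have "g \<otimes> (inv g \<otimes> (a [^] d) \<otimes> g) \<otimes> inv g = g \<otimes> \<one> \<otimes> inv g" by simp
    then show "a [^] d = \<one>" using c assms(2) by (simp add: m_assoc[symmetric]) (simp add: m_assoc)
  next
    assume "a [^] d = \<one>"
    then show "(inv g \<otimes> a \<otimes> g) [^] d = \<one>" using e assms(2) by simp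
  qed
qed

theorem lemma3p15:
  fixes Q :: "'q set" and G :: "('g,'m) monoid_scheme"
    and act :: "'q \<Rightarrow> 'g \<Rightarrow> 'q" and aug :: "'q \<Rightarrow> 'g"
    and ip :: "'p \<Rightarrow> 'q" and ia :: "'a \<Rightarrow> 'g"
    and xs :: "'p list" and ys :: "('p + 'a) list" and es :: "bool list"
    and d :: int and xi xj :: 'p
  assumes "aug_quandle Q G act aug"
    and "\<forall>x. ip x \<in> Q"
    and "\<forall>a. ia a \<in> carrier G"
    and "Q = {act (ip x) g | x g. g \<in> carrier G}"
    and "generate G (range (op_gen aug ip ia)) = carrier G"
    and "component_relations G act aug ip ia xs ys es"
    and "xi \<in> set xs" and "xj \<in> set xs"
    and "aug (ip xi) [^]\<^bsub>G\<^esub> d = \<one>\<^bsub>G\<^esub>"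
  shows "aug (ip xj) [^]\<^bsub>G\<^esub> d = \<one>\<^bsub>G\<^esub>"
proof -
  have grp: "group G" using assms(1) unfolding aug_quandle_def by blast
  interpret group G by fact
  have augc: "\<And>x. aug (ip x) \<in> carrier G" using assms(1,2) unfolding aug_quandle_def by blast
  have augact: "\<And>x g. g \<in> carrier G \<Longrightarrow> aug (act (ip x) g) = inv\<^bsub>G\<^esub> g \<otimes>\<^bsub>G\<^esub> aug (ip x) \<otimes>\<^bsub>G\<^esub> g"
    using assms(1,2) unfolding aug_quandle_def by blast
  have opc: "\<And>y. op_gen aug ip ia y \<in> carrier G"
    subgoal for y using augc assms(3) by (cases y) auto done
  have sc: "\<And>y e. sgn_pow G (op_gen aug ip ia y) e \<in> carrier G"
    using opc by (simp add: sgn_pow_def)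
  define n where "n = length xs"
  define P where "P k \<longleftrightarrow> aug (ip (xs ! k)) [^]\<^bsub>G\<^esub> d = \<one>\<^bsub>G\<^esub>" for k
  have rel: "\<And>k. k < n \<Longrightarrow> ip (xs ! ((k + 1) mod n)) =
        act (ip (xs ! k)) (sgn_pow G (op_gen aug ip ia (ys ! k)) (es ! k))"
    using assms(6) unfolding component_relations_def n_def by blast
  have all: "\<forall>k. k < n \<longrightarrow> (P k \<longleftrightarrow> P 0)"
  proof
    fix k show "k < n \<longrightarrow> (P k \<longleftrightarrow> P 0)"
    proof (induction k)
      case 0 then show ?case by simp
    next
      case (Suc k)
      show ?case
      proof
        assume k1: "Suc k < n"
        then have "(k + 1) mod n = Suc k" by simp
        with rel[of k] k1 have eq: "ip (xs ! Suc k) =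
          act (ip (xs ! k)) (sgn_pow G (op_gen aug ip ia (ys ! k)) (es ! k))" by simp
        have "P (Suc k) \<longleftrightarrow> P k"
          unfolding P_def eq augact[OF sc]
          by (rule conj_pow_one[OF grp sc augc])
        with Suc k1 show "P (Suc k) \<longleftrightarrow> P 0" by simp
      qed
    qed
  qed
  obtain i where i: "i < n" "xs ! i = xi" using assms(7) unfolding n_def by (auto simp: in_set_conv_nth)
  obtain j where j: "j < n" "xs ! j = xj" using assms(8) unfolding n_def by (auto simp: in_set_conv_nth)
  have "P i" using i assms(9) by (simp add: P_def)
  then have "P j" using all i j by blast
  then show ?thesis using j by (simp add: P_def)
qed

end
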